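(* Let $R$ be a ring and let $\mathfrak{p}$ be a proper left ideal of $R$. The following statements are equivalent: (1) $\mathfrak{p}$ is weakly prime. (2) For left ideals $A,B$ of $R$ both containing $\mathfrak{p}$, $AB\subseteq\mathfrak{p}$ implies $A=\mathfrak{p}$ or $B=\mathfrak{p}$. (3) For left ideals $A,B$ of $R$, $(A+\mathfrak{p})(B+\mathfrak{p})\subseteq\mathfrak{p}$ implies $A\subseteq\mathfrak{p}$ or $B\subseteq\mathfrak{p}$. (4) For left ideals $A,B$ of $R$, $AB\subseteq\mathfrak{p}$ and $\mathfrak{p}\subseteq A$ imply $\mathfrak{p}=A$ or $B\subseteq\mathfrak{p}$. (5) For left ideals $A,B$ of $R$, $(A+\mathfrak{p})B\subseteq\mathfrak{p}$ implies $A\subseteq\mathfrak{p}$ or $B\subseteq\mathfrak{p}$. (6) For $a,b\in R$, $(a+\mathfrak{p})R(b+\mathfrak{p})\subseteq\mathfrak{p}$ implies $a\in\mathfrak{p}$ or $b\in\mathfrak{p}$. (7) For every two-sided ideal $A$ of $R$ and every left ideal $B$ of $R$, $AB\subseteq\mathfrak{p}$ and $\mathfrak{p}B\subseteq\mathfrak{p}$ imply $A\subseteq\mathfrak{p}$ or $B\subseteq\mathfrak{p}$. (8) For $a,b\in R$, $aRb\subseteq\mathfrak{p}$ and $\mathfrak{p}Rb\subseteq\mathfrak{p}$ imply $a\in\mathfrak{p}$ or $b\in\mathfrak{p}$.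
   Context: Rings are associative and unital, not necessarily commutative. A left ideal $\mathfrak{p}$ of $R$ is weakly prime if $\mathfrak{p}\neq R$ and, for all left ideals $A,B$ of $R$, $AB\subseteq\mathfrak{p}$ and $\mathfrak{p}B\subseteq\mathfrak{p}$ imply $A\subseteq\mathfrak{p}$ or $B\subseteq\mathfrak{p}$. For subsets, $(a+\mathfrak{p})R(b+\mathfrak{p})$ denotes the set of all products $xry$ with $x\in a+\mathfrak{p}$, $r\in R$, $y\in b+\mathfrak{p}$. *)

theory Defs
  imports Main
begin

definition left_ideal :: "'a::ring_1 set \<Rightarrow> bool" where
  "left_ideal I \<longleftrightarrow> 0 \<in> I \<and> (\<forall>x\<in>I. \<forall>y\<in>I. x + y \<in> I) \<and> (\<forall>x\<in>I. - x \<in> I)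
     \<and> (\<forall>r x. x \<in> I \<longrightarrow> r * x \<in> I)"

definition two_sided_ideal :: "'a::ring_1 set \<Rightarrow> bool" where
  "two_sided_ideal I \<longleftrightarrow> left_ideal I \<and> (\<forall>r x. x \<in> I \<longrightarrow> x * r \<in> I)"

definition setmult :: "'a::ring_1 set \<Rightarrow> 'a set \<Rightarrow> 'a set" where
  "setmult A B = {sum_list (map (\<lambda>(a, b). a * b) xs) | xs. set xs \<subseteq> A \<times> B}"

definition setadd :: "'a::ring_1 set \<Rightarrow> 'a set \<Rightarrow> 'a set" where
  "setadd A B = {a + b | a b. a \<in> A \<and> b \<in> B}"

definition coset :: "'a::ring_1 \<Rightarrow> 'a set \<Rightarrow> 'a set" where
  "coset a P = {a + x | x. x \<in> P}"

text \<open>X R Y = set of all products x*r*y with x in X, r in R, y in Y.\<close>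
definition sandwich :: "'a::ring_1 set \<Rightarrow> 'a set \<Rightarrow> 'a set" where
  "sandwich X Y = {x * r * y | x r y. x \<in> X \<and> y \<in> Y}"

definition weakly_prime :: "'a::ring_1 set \<Rightarrow> bool" where
  "weakly_prime P \<longleftrightarrow> left_ideal P \<and> P \<noteq> UNIV \<and>
     (\<forall>A B. left_ideal A \<longrightarrow> left_ideal B \<longrightarrow> setmult A B \<subseteq> P \<longrightarrow> setmult P B \<subseteq> P
        \<longrightarrow> A \<subseteq> P \<or> B \<subseteq> P)"

end

theory Submission
  imports Defs
begin

lemma li_0: "left_ideal I \<Longrightarrow> 0 \<in> I" by (simp add: left_ideal_def)
lemma li_add: "left_ideal I \<Longrightarrow> x \<in> I \<Longrightarrow> y \<in> I \<Longrightarrow> x + y \<in> I" by (simp add: left_ideal_def)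
lemma li_neg: "left_ideal I \<Longrightarrow> x \<in> I \<Longrightarrow> - x \<in> I" by (simp add: left_ideal_def)
lemma li_mul: "left_ideal I \<Longrightarrow> x \<in> I \<Longrightarrow> r * x \<in> I" by (simp add: left_ideal_def)
lemma li_diff: "left_ideal I \<Longrightarrow> x \<in> I \<Longrightarrow> y \<in> I \<Longrightarrow> x - y \<in> I"
  by (metis li_add li_neg diff_conv_add_uminus)

lemma sumlist_in:
  assumes "left_ideal P" "\<forall>a\<in>A. \<forall>b\<in>B. a*b \<in> P" "set xs \<subseteq> A \<times> B"
  shows "sum_list (map (\<lambda>(a, b). a * b) xs) \<in> P"
  using assms(3)
proof (induction xs)
  case Nil then show ?case using li_0[OF assms(1)] by simp
next
  case (Cons x xs)
  then show ?case using assms li_add[OF assms(1)] by (cases x) auto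
qed

lemma setmult_sub:
  assumes "left_ideal P"
  shows "setmult A B \<subseteq> P \<longleftrightarrow> (\<forall>a\<in>A. \<forall>b\<in>B. a*b \<in> P)"
proof
  assume h: "setmult A B \<subseteq> P"
  show "\<forall>a\<in>A. \<forall>b\<in>B. a*b \<in> P"
  proof (intro ballI)
    fix a b assume "a \<in> A" "b \<in> B"
    then have "sum_list (map (\<lambda>(a, b). a * b) [(a,b)]) \<in> setmult A B"
      unfolding setmult_def by (intro CollectI exI[of _ "[(a,b)]"]) simp
    then show "a*b \<in> P" using h by auto
  qed
next
  assume "\<forall>a\<in>A. \<forall>b\<in>B. a*b \<in> P"
  then show "setmult A B \<subseteq> P" unfolding setmult_def using sumlist_in[OF assms] by blast
qed

lemma setadd_li:
  assumes "left_ideal A" "left_ideal P"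
  shows "left_ideal (setadd A P)"
  unfolding left_ideal_def setadd_def
proof (intro conjI allI impI ballI)
  show "0 \<in> {a + b |a b. a \<in> A \<and> b \<in> P}" using li_0[OF assms(1)] li_0[OF assms(2)] by force
next
  fix x y assume "x \<in> {a + b |a b. a \<in> A \<and> b \<in> P}" "y \<in> {a + b |a b. a \<in> A \<and> b \<in> P}"
  then obtain a b c d where "x = a + b" "y = c + d" "a \<in> A" "b \<in> P" "c \<in> A" "d \<in> P" by auto
  then show "x + y \<in> {a + b |a b. a \<in> A \<and> b \<in> P}"
    using li_add[OF assms(1)] li_add[OF assms(2)]
    by (intro CollectI exI[of _ "a+c"] exI[of _ "b+d"]) (simp add: algebra_simps)
next
  fix x assume "x \<in> {a + b |a b. a \<in> A \<and> b \<in> P}"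
  then obtain a b where "x = a + b" "a \<in> A" "b \<in> P" by auto
  then show "- x \<in> {a + b |a b. a \<in> A \<and> b \<in> P}"
    using li_neg[OF assms(1)] li_neg[OF assms(2)]
    by (intro CollectI exI[of _ "-a"] exI[of _ "-b"]) (simp add: algebra_simps)
next
  fix r x assume "x \<in> {a + b |a b. a \<in> A \<and> b \<in> P}"
  then obtain a b where "x = a + b" "a \<in> A" "b \<in> P" by auto
  then show "r * x \<in> {a + b |a b. a \<in> A \<and> b \<in> P}"
    using li_mul[OF assms(1)] li_mul[OF assms(2)]
    by (intro CollectI exI[of _ "r*a"] exI[of _ "r*b"]) (simp add: algebra_simps)
qed

lemma setadd_sup1: "left_ideal P \<Longrightarrow> A \<subseteq> setadd A P"
proof
  fix x assume "left_ideal P" "x \<in> A"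
  then show "x \<in> setadd A P" unfolding setadd_def
    by (intro CollectI exI[of _ x] exI[of _ 0]) (simp add: li_0)
qed
lemma setadd_sup2: "left_ideal A \<Longrightarrow> P \<subseteq> setadd A P"
proof
  fix x assume "left_ideal A" "x \<in> P"
  then show "x \<in> setadd A P" unfolding setadd_def
    by (intro CollectI exI[of _ 0] exI[of _ x]) (simp add: li_0)
qed


lemma genB_li:
  assumes "left_ideal P"
  shows "left_ideal {s*b + q | s q. q \<in> P}"
  unfolding left_ideal_def
proof (intro conjI allI impI ballI)
  show "0 \<in> {s*b + q | s q. q \<in> P}" using li_0[OF assms] by (intro CollectI exI[of _ 0]) auto
next
  fix x y assume "x \<in> {s*b + q | s q. q \<in> P}" "y \<in> {s*b + q | s q. q \<in> P}"
  then obtain s q s' q' where "x = s*b+q" "y = s'*b+q'" "q \<in> P" "q' \<in> P" by auto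
  then show "x + y \<in> {s*b + q | s q. q \<in> P}" using li_add[OF assms]
    by (intro CollectI exI[of _ "s+s'"] exI[of _ "q+q'"]) (simp add: algebra_simps)
next
  fix x assume "x \<in> {s*b + q | s q. q \<in> P}"
  then obtain s q where "x = s*b+q" "q \<in> P" by auto
  then show "- x \<in> {s*b + q | s q. q \<in> P}" using li_neg[OF assms]
    by (intro CollectI exI[of _ "-s"] exI[of _ "-q"]) (simp add: algebra_simps)
next
  fix r x assume "x \<in> {s*b + q | s q. q \<in> P}"
  then obtain s q where "x = s*b+q" "q \<in> P" by auto
  then show "r * x \<in> {s*b + q | s q. q \<in> P}" using li_mul[OF assms]
    by (intro CollectI exI[of _ "r*s"] exI[of _ "r*q"]) (simp add: algebra_simps)
qed

lemma genA_li:
  assumes "left_ideal P"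
  shows "left_ideal {x. \<forall>r. x*r*b \<in> P}"
  unfolding left_ideal_def
proof (intro conjI allI impI ballI)
  show "0 \<in> {x. \<forall>r. x*r*b \<in> P}" using li_0[OF assms] by simp
next
  fix x y assume "x \<in> {x. \<forall>r. x*r*b \<in> P}" "y \<in> {x. \<forall>r. x*r*b \<in> P}"
  then show "x + y \<in> {x. \<forall>r. x*r*b \<in> P}" using li_add[OF assms]
    by (simp add: distrib_right)
next
  fix x assume "x \<in> {x. \<forall>r. x*r*b \<in> P}"
  then show "- x \<in> {x. \<forall>r. x*r*b \<in> P}" using li_neg[OF assms] by simp
next
  fix s x assume "x \<in> {x. \<forall>r. x*r*b \<in> P}"
  then show "s * x \<in> {x. \<forall>r. x*r*b \<in> P}" using li_mul[OF assms]
    by (simp add: mult.assoc)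
qed

lemma wp_iff:
  assumes "left_ideal P" "P \<noteq> UNIV"
  shows "weakly_prime P \<longleftrightarrow> (\<forall>A B. left_ideal A \<longrightarrow> left_ideal B \<longrightarrow>
     (\<forall>a\<in>A. \<forall>b\<in>B. a*b \<in> P) \<longrightarrow> (\<forall>a\<in>P. \<forall>b\<in>B. a*b \<in> P) \<longrightarrow> A \<subseteq> P \<or> B \<subseteq> P)"
  unfolding weakly_prime_def using assms setmult_sub[OF assms(1)] by simp


lemma genA_ts:
  assumes "left_ideal P"
  shows "two_sided_ideal {x. \<forall>r. x*r*b \<in> P}"
  unfolding two_sided_ideal_def
proof (intro conjI genA_li[OF assms] allI impI)
  fix r x assume "x \<in> {x. \<forall>r. x*r*b \<in> P}"
  then have "\<forall>s. x*(r*s)*b \<in> P" by blast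
  then show "x * r \<in> {x. \<forall>r. x*r*b \<in> P}" by (simp add: mult.assoc)
qed

lemma genB_mem: "left_ideal P \<Longrightarrow> b \<in> {s*b + q | s q. q \<in> P}"
proof -
  assume "left_ideal P"
  then have "b = 1*b + 0 \<and> (0::'a) \<in> P" by (simp add: li_0)
  then show ?thesis by blast
qed

lemma genB_sup: "(P::'a::ring_1 set) \<subseteq> {s*b + q | s q. q \<in> P}"
proof
  fix x assume "x \<in> P"
  then have "x = 0*b + x \<and> x \<in> P" by simp
  then show "x \<in> {s*b + q | s q. q \<in> P}" by blast
qed

definition W where "W P \<longleftrightarrow> (\<forall>A B. left_ideal A \<longrightarrow> left_ideal B \<longrightarrow>
     (\<forall>a\<in>A. \<forall>b\<in>B. a*b \<in> P) \<longrightarrow> (\<forall>a\<in>P. \<forall>b\<in>B. a*b \<in> P) \<longrightarrow> A \<subseteq> P \<or> B \<subseteq> P)"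

definition C8 where "C8 P \<longleftrightarrow> (\<forall>a b. (\<forall>r. a*r*b \<in> P) \<longrightarrow> (\<forall>p\<in>P. \<forall>r. p*r*b \<in> P) \<longrightarrow> a \<in> P \<or> b \<in> P)"

lemma Q_genAB:
  assumes "left_ideal P"
  shows "\<forall>x\<in>{x. \<forall>r. x*r*b \<in> P}. \<forall>y\<in>{s*b + q | s q. q \<in> P}. x*y \<in> P"
proof (intro ballI)
  fix x y assume x: "x\<in>{x. \<forall>r. x*r*b \<in> P}" and "y\<in>{s*b + q | s q. q \<in> P}"
  then obtain s q where y: "y = s*b+q" "q \<in> P" by auto
  have "x*y = x*s*b + x*q" using y by (simp add: algebra_simps)
  then show "x*y \<in> P" using x y li_add[OF assms] li_mul[OF assms] by simp
qed

lemma W_C8: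
  assumes "left_ideal P" "W P"
  shows "C8 P"
  unfolding C8_def
proof (intro allI impI)
  fix a b assume h1: "\<forall>r. a*r*b \<in> P" and h2: "\<forall>p\<in>P. \<forall>r. p*r*b \<in> P"
  let ?A = "{x. \<forall>r. x*r*b \<in> P}" and ?B = "{s*b + q | s q. q \<in> P}"
  have l1: "left_ideal ?A" by (rule genA_li[OF assms(1)])
  have l2: "left_ideal ?B" by (rule genB_li[OF assms(1)])
  have q1: "\<forall>x\<in>?A. \<forall>y\<in>?B. x*y \<in> P" by (rule Q_genAB[OF assms(1)])
  have "P \<subseteq> ?A" using h2 by blast
  then have q2: "\<forall>x\<in>P. \<forall>y\<in>?B. x*y \<in> P" using q1 by blast
  have "?A \<subseteq> P \<or> ?B \<subseteq> P"
    using assms(2) l1 l2 q1 q2 unfolding W_def by blast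
  then show "a \<in> P \<or> b \<in> P" using h1 genB_mem[OF assms(1), of b] by blast
qed

lemma C8_W:
  assumes "left_ideal P" "C8 P"
  shows "W P"
  unfolding W_def
proof (intro allI impI)
  fix A B :: "'a set" assume A: "left_ideal A" and B: "left_ideal B"
    and q1: "\<forall>a\<in>A. \<forall>b\<in>B. a*b \<in> P" and q2: "\<forall>a\<in>P. \<forall>b\<in>B. a*b \<in> P"
  show "A \<subseteq> P \<or> B \<subseteq> P"
  proof (rule ccontr)
    assume "\<not> (A \<subseteq> P \<or> B \<subseteq> P)"
    then obtain a b where ab: "a \<in> A" "a \<notin> P" "b \<in> B" "b \<notin> P" by blast
    have "\<forall>r. a*r*b \<in> P" using q1 ab li_mul[OF B] by (simp add: mult.assoc)
    moreover have "\<forall>p\<in>P. \<forall>r. p*r*b \<in> P" using q2 ab li_mul[OF B] by (simp add: mult.assoc)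
    ultimately show False using assms(2)[unfolded C8_def] ab by blast
  qed
qed

lemma QaddL:
  assumes "left_ideal A" "left_ideal P"
  shows "(\<forall>x\<in>setadd A P. \<forall>b\<in>B. x*b \<in> P) \<longleftrightarrow>
     (\<forall>a\<in>A. \<forall>b\<in>B. a*b \<in> P) \<and> (\<forall>p\<in>P. \<forall>b\<in>B. p*b \<in> P)"
proof
  assume "\<forall>x\<in>setadd A P. \<forall>b\<in>B. x*b \<in> P"
  then show "(\<forall>a\<in>A. \<forall>b\<in>B. a*b \<in> P) \<and> (\<forall>p\<in>P. \<forall>b\<in>B. p*b \<in> P)"
    using setadd_sup1[OF assms(2), of A] setadd_sup2[OF assms(1), of P] by blast
next
  assume h: "(\<forall>a\<in>A. \<forall>b\<in>B. a*b \<in> P) \<and> (\<forall>p\<in>P. \<forall>b\<in>B. p*b \<in> P)"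
  show "\<forall>x\<in>setadd A P. \<forall>b\<in>B. x*b \<in> P"
  proof (intro ballI)
    fix x b assume "x \<in> setadd A P" "b \<in> B"
    then obtain a p where "x = a + p" "a \<in> A" "p \<in> P" "b \<in> B" unfolding setadd_def by auto
    then show "x*b \<in> P" using h li_add[OF assms(2)] by (simp add: distrib_right)
  qed
qed

lemma QaddR:
  assumes "left_ideal B" "left_ideal P"
  shows "(\<forall>x\<in>X. \<forall>y\<in>setadd B P. x*y \<in> P) \<longleftrightarrow> (\<forall>x\<in>X. \<forall>b\<in>B. x*b \<in> P)"
proof
  assume "\<forall>x\<in>X. \<forall>y\<in>setadd B P. x*y \<in> P"
  then show "\<forall>x\<in>X. \<forall>b\<in>B. x*b \<in> P"
    using setadd_sup1[OF assms(2), of B] by blast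
next
  assume h: "\<forall>x\<in>X. \<forall>b\<in>B. x*b \<in> P"
  show "\<forall>x\<in>X. \<forall>y\<in>setadd B P. x*y \<in> P"
  proof (intro ballI)
    fix x y assume "x \<in> X" "y \<in> setadd B P"
    then obtain b p where "y = b + p" "b \<in> B" "p \<in> P" "x \<in> X" unfolding setadd_def by auto
    then show "x*y \<in> P" using h li_add[OF assms(2)] li_mul[OF assms(2)] by (simp add: distrib_left)
  qed
qed

lemma sw6:
  assumes "left_ideal P"
  shows "sandwich (coset a P) (coset b P) \<subseteq> P \<longleftrightarrow>
    (\<forall>r. a*r*b \<in> P) \<and> (\<forall>p\<in>P. \<forall>r. p*r*b \<in> P)"
proof
  assume h: "sandwich (coset a P) (coset b P) \<subseteq> P"
  have h': "(a+p)*r*(b+q) \<in> P" if "p \<in> P" "q \<in> P" for p q r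
  proof -
    have "(a+p)*r*(b+q) \<in> sandwich (coset a P) (coset b P)"
      unfolding sandwich_def coset_def using that by blast
    then show ?thesis using h by blast
  qed
  have 1: "a*r*b \<in> P" for r using h'[OF li_0[OF assms] li_0[OF assms], of r] by simp
  have "p*r*b \<in> P" if "p \<in> P" for p r
  proof -
    have "p*r*b = (a+p)*r*(b+0) - a*r*b" by (simp add: algebra_simps)
    then show ?thesis using li_diff[OF assms h'[OF that li_0[OF assms]] 1] by simp
  qed
  then show "(\<forall>r. a*r*b \<in> P) \<and> (\<forall>p\<in>P. \<forall>r. p*r*b \<in> P)" using 1 by blast
next
  assume h: "(\<forall>r. a*r*b \<in> P) \<and> (\<forall>p\<in>P. \<forall>r. p*r*b \<in> P)"
  show "sandwich (coset a P) (coset b P) \<subseteq> P"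
  proof
    fix z assume "z \<in> sandwich (coset a P) (coset b P)"
    then obtain p r q where z: "z = (a+p)*r*(b+q)" "p \<in> P" "q \<in> P"
      unfolding sandwich_def coset_def by blast
    have "z = (a*r*b + p*r*b) + (a*r)*q + (p*r)*q" using z by (simp add: algebra_simps)
    then show "z \<in> P" using h z li_add[OF assms] li_mul[OF assms] by simp
  qed
qed

lemma sw8a: "sandwich {a} {b} \<subseteq> P \<longleftrightarrow> (\<forall>r. a*r*b \<in> P)"
  unfolding sandwich_def by blast
lemma sw8b: "sandwich P {b} \<subseteq> P \<longleftrightarrow> (\<forall>p\<in>P. \<forall>r. p*r*b \<in> P)"
  unfolding sandwich_def by blast


lemma allAB_cong:
  assumes "\<And>A B. left_ideal A \<Longrightarrow> left_ideal B \<Longrightarrow> (X A B \<longleftrightarrow> Y A B)"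
  shows "(\<forall>A B. left_ideal A \<longrightarrow> left_ideal B \<longrightarrow> X A B) \<longleftrightarrow> (\<forall>A B. left_ideal A \<longrightarrow> left_ideal B \<longrightarrow> Y A B)"
  using assms by blast

lemma eq3:
  assumes "left_ideal P" "left_ideal A" "left_ideal B"
  shows "setmult (setadd A P) (setadd B P) \<subseteq> P \<longleftrightarrow>
     (\<forall>a\<in>A. \<forall>b\<in>B. a*b \<in> P) \<and> (\<forall>p\<in>P. \<forall>b\<in>B. p*b \<in> P)"
  unfolding setmult_sub[OF assms(1)] QaddL[OF assms(2,1)] QaddR[OF assms(3,1)] ..

lemma eq5:
  assumes "left_ideal P" "left_ideal A"
  shows "setmult (setadd A P) B \<subseteq> P \<longleftrightarrow>
     (\<forall>a\<in>A. \<forall>b\<in>B. a*b \<in> P) \<and> (\<forall>p\<in>P. \<forall>b\<in>B. p*b \<in> P)"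
  unfolding setmult_sub[OF assms(1)] QaddL[OF assms(2,1)] ..

theorem proposition2p21:
  fixes P :: "'a::ring_1 set"
  assumes "left_ideal P" and "P \<noteq> UNIV"
  shows
   "(weakly_prime P \<longleftrightarrow>
      (\<forall>A B. left_ideal A \<longrightarrow> left_ideal B \<longrightarrow> P \<subseteq> A \<longrightarrow> P \<subseteq> B \<longrightarrow>
         setmult A B \<subseteq> P \<longrightarrow> A = P \<or> B = P))
  \<and> (weakly_prime P \<longleftrightarrow>
      (\<forall>A B. left_ideal A \<longrightarrow> left_ideal B \<longrightarrow>
         setmult (setadd A P) (setadd B P) \<subseteq> P \<longrightarrow> A \<subseteq> P \<or> B \<subseteq> P))
  \<and> (weakly_prime P \<longleftrightarrow>
      (\<forall>A B. left_ideal A \<longrightarrow> left_ideal B \<longrightarrow>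
         setmult A B \<subseteq> P \<longrightarrow> P \<subseteq> A \<longrightarrow> P = A \<or> B \<subseteq> P))
  \<and> (weakly_prime P \<longleftrightarrow>
      (\<forall>A B. left_ideal A \<longrightarrow> left_ideal B \<longrightarrow>
         setmult (setadd A P) B \<subseteq> P \<longrightarrow> A \<subseteq> P \<or> B \<subseteq> P))
  \<and> (weakly_prime P \<longleftrightarrow>
      (\<forall>a b. sandwich (coset a P) (coset b P) \<subseteq> P \<longrightarrow> a \<in> P \<or> b \<in> P))
  \<and> (weakly_prime P \<longleftrightarrow>
      (\<forall>A B. two_sided_ideal A \<longrightarrow> left_ideal B \<longrightarrow>
         setmult A B \<subseteq> P \<longrightarrow> setmult P B \<subseteq> P \<longrightarrow> A \<subseteq> P \<or> B \<subseteq> P))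
  \<and> (weakly_prime P \<longleftrightarrow>
      (\<forall>a b. sandwich {a} {b} \<subseteq> P \<longrightarrow> sandwich P {b} \<subseteq> P \<longrightarrow> a \<in> P \<or> b \<in> P))"
proof -
  note M = setmult_sub[OF assms(1)]
  have WP: "weakly_prime P \<longleftrightarrow> W P" using wp_iff[OF assms] unfolding W_def .
  have W8: "W P \<longleftrightarrow> C8 P" using W_C8 C8_W assms(1) by blast
  have c2: "W P \<longleftrightarrow> (\<forall>A B. left_ideal A \<longrightarrow> left_ideal B \<longrightarrow> P \<subseteq> A \<longrightarrow> P \<subseteq> B \<longrightarrow>
         setmult A B \<subseteq> P \<longrightarrow> A = P \<or> B = P)"
  proof
    assume w: "W P"
    show "\<forall>A B. left_ideal A \<longrightarrow> left_ideal B \<longrightarrow> P \<subseteq> A \<longrightarrow> P \<subseteq> B \<longrightarrow>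
         setmult A B \<subseteq> P \<longrightarrow> A = P \<or> B = P"
    proof (intro allI impI)
      fix A B assume "left_ideal A" "left_ideal B" "P \<subseteq> A" "P \<subseteq> B" "setmult A B \<subseteq> P"
      then show "A = P \<or> B = P" using w[unfolded W_def, rule_format, of A B] M[of A B] by blast
    qed
  next
    assume c: "\<forall>A B. left_ideal A \<longrightarrow> left_ideal B \<longrightarrow> P \<subseteq> A \<longrightarrow> P \<subseteq> B \<longrightarrow>
         setmult A B \<subseteq> P \<longrightarrow> A = P \<or> B = P"
    show "W P" unfolding W_def
    proof (intro allI impI)
      fix A B :: "'a set" assume A: "left_ideal A" and B: "left_ideal B"
        and q1: "\<forall>a\<in>A. \<forall>b\<in>B. a*b \<in> P" and q2: "\<forall>a\<in>P. \<forall>b\<in>B. a*b \<in> P"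
      have "setmult (setadd A P) (setadd B P) \<subseteq> P"
        unfolding M QaddR[OF B assms(1)] QaddL[OF A assms(1)] using q1 q2 by blast
      then have "setadd A P = P \<or> setadd B P = P"
        using c setadd_li[OF A assms(1)] setadd_li[OF B assms(1)]
          setadd_sup2[OF A, of P] setadd_sup2[OF B, of P] by blast
      then show "A \<subseteq> P \<or> B \<subseteq> P" using setadd_sup1[OF assms(1), of A] setadd_sup1[OF assms(1), of B]
        by blast
    qed
  qed
  have c3: "W P \<longleftrightarrow> (\<forall>A B. left_ideal A \<longrightarrow> left_ideal B \<longrightarrow>
         setmult (setadd A P) (setadd B P) \<subseteq> P \<longrightarrow> A \<subseteq> P \<or> B \<subseteq> P)"
    unfolding W_def by (rule allAB_cong) (simp add: eq3[OF assms(1)], blast)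
  have c5: "W P \<longleftrightarrow> (\<forall>A B. left_ideal A \<longrightarrow> left_ideal B \<longrightarrow>
         setmult (setadd A P) B \<subseteq> P \<longrightarrow> A \<subseteq> P \<or> B \<subseteq> P)"
    unfolding W_def by (rule allAB_cong) (simp add: eq5[OF assms(1)], blast)
  have c4: "W P \<longleftrightarrow> (\<forall>A B. left_ideal A \<longrightarrow> left_ideal B \<longrightarrow>
         setmult A B \<subseteq> P \<longrightarrow> P \<subseteq> A \<longrightarrow> P = A \<or> B \<subseteq> P)"
  proof
    assume w: "W P"
    show "\<forall>A B. left_ideal A \<longrightarrow> left_ideal B \<longrightarrow>
         setmult A B \<subseteq> P \<longrightarrow> P \<subseteq> A \<longrightarrow> P = A \<or> B \<subseteq> P"
    proof (intro allI impI)
      fix A B assume "left_ideal A" "left_ideal B" "P \<subseteq> A" "setmult A B \<subseteq> P"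
      then show "P = A \<or> B \<subseteq> P" using w[unfolded W_def, rule_format, of A B] M[of A B] by blast
    qed
  next
    assume c: "\<forall>A B. left_ideal A \<longrightarrow> left_ideal B \<longrightarrow>
         setmult A B \<subseteq> P \<longrightarrow> P \<subseteq> A \<longrightarrow> P = A \<or> B \<subseteq> P"
    show "W P" unfolding W_def
    proof (intro allI impI)
      fix A B :: "'a set" assume A: "left_ideal A" and B: "left_ideal B"
        and q1: "\<forall>a\<in>A. \<forall>b\<in>B. a*b \<in> P" and q2: "\<forall>a\<in>P. \<forall>b\<in>B. a*b \<in> P"
      have "setmult (setadd A P) B \<subseteq> P"
        unfolding M QaddL[OF A assms(1)] using q1 q2 by blast
      then have "P = setadd A P \<or> B \<subseteq> P"
        using c setadd_li[OF A assms(1)] B setadd_sup2[OF A, of P] by blast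
      then show "A \<subseteq> P \<or> B \<subseteq> P" using setadd_sup1[OF assms(1), of A] by blast
    qed
  qed
  have c6: "C8 P \<longleftrightarrow> (\<forall>a b. sandwich (coset a P) (coset b P) \<subseteq> P \<longrightarrow> a \<in> P \<or> b \<in> P)"
    unfolding C8_def sw6[OF assms(1)] by blast
  have c8: "C8 P \<longleftrightarrow> (\<forall>a b. sandwich {a} {b} \<subseteq> P \<longrightarrow> sandwich P {b} \<subseteq> P \<longrightarrow> a \<in> P \<or> b \<in> P)"
    unfolding C8_def sw8a sw8b by blast
  have c7: "W P \<longleftrightarrow> (\<forall>A B. two_sided_ideal A \<longrightarrow> left_ideal B \<longrightarrow>
         setmult A B \<subseteq> P \<longrightarrow> setmult P B \<subseteq> P \<longrightarrow> A \<subseteq> P \<or> B \<subseteq> P)"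
  proof
    assume "W P"
    then show "\<forall>A B. two_sided_ideal A \<longrightarrow> left_ideal B \<longrightarrow>
         setmult A B \<subseteq> P \<longrightarrow> setmult P B \<subseteq> P \<longrightarrow> A \<subseteq> P \<or> B \<subseteq> P"
      unfolding W_def M two_sided_ideal_def by blast
  next
    assume c: "\<forall>A B. two_sided_ideal A \<longrightarrow> left_ideal B \<longrightarrow>
         setmult A B \<subseteq> P \<longrightarrow> setmult P B \<subseteq> P \<longrightarrow> A \<subseteq> P \<or> B \<subseteq> P"
    have "C8 P" unfolding C8_def
    proof (intro allI impI)
      fix a b assume h1: "\<forall>r. a*r*b \<in> P" and h2: "\<forall>p\<in>P. \<forall>r. p*r*b \<in> P"
      let ?A = "{x. \<forall>r. x*r*b \<in> P}" and ?B = "{s*b + q | s q. q \<in> P}"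
      have l1: "two_sided_ideal ?A" by (rule genA_ts[OF assms(1)])
      have l2: "left_ideal ?B" by (rule genB_li[OF assms(1)])
      have q1: "\<forall>x\<in>?A. \<forall>y\<in>?B. x*y \<in> P" by (rule Q_genAB[OF assms(1)])
      have "P \<subseteq> ?A" using h2 by blast
      then have q2: "\<forall>x\<in>P. \<forall>y\<in>?B. x*y \<in> P" using q1 by blast
      have "?A \<subseteq> P \<or> ?B \<subseteq> P"
        using c l1 l2 q1 q2 unfolding M by blast
      then show "a \<in> P \<or> b \<in> P" using h1 genB_mem[OF assms(1), of b] by blast
    qed
    then show "W P" using W8 by blast
  qed
  have W6: "W P \<longleftrightarrow> (\<forall>a b. sandwich (coset a P) (coset b P) \<subseteq> P \<longrightarrow> a \<in> P \<or> b \<in> P)"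
    using W8 c6 by (rule trans)
  have W8': "W P \<longleftrightarrow> (\<forall>a b. sandwich {a} {b} \<subseteq> P \<longrightarrow> sandwich P {b} \<subseteq> P \<longrightarrow> a \<in> P \<or> b \<in> P)"
    using W8 c8 by (rule trans)
  show ?thesis unfolding WP
    by (intro conjI c2 c3 c4 c5 W6 c7 W8')
qed

end
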